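(* Let $\sigma$ be a pre-weight function and $\mathfrak{M}_\sigma=\{S^{(x)}:x>0\}$ its associated weight matrix. Then the strong dual of $\Lambda^{\{\mathfrak{M}_\sigma\}}$ is topologically isomorphic to \[ \mathcal{A}^0=\{f\in\mathcal{H}(\mathbb{C}):\ \forall n\in\mathbb{N}_{\ge1}\ \exists A>0\ \forall z\in\mathbb{C}:\ |f(z)|\le Ae^{\omega_{S^{(n)}}(|z|/n)}\}, \] equipped with the topology given by the seminorms $f\mapsto\sup_{z\in\mathbb{C}}|f(z)|e^{-\omega_{S^{(n)}}(|z|/n)}$, $n\in\mathbb{N}_{\ge1}$. The isomorphism is given by $T\mapsto\Phi(T)$, $\Phi(T)(z)=\sum_jT(e_j)z^j$, where $e_j$ is the $j$-th unit vector.
   Context: A pre-weight function is a continuous increasing $\sigma:[0,\infty)\to[0,\infty)$ with $\sigma(0)=0$, $\sigma(t)\to\infty$, $\log t=o(\sigma(t))$, $t\mapsto\sigma(e^t)$ convex. $\varphi^*_\sigma(x)=\sup_{y\ge0}(xy-\sigma(e^y))$, $S^{(x)}_j=\exp(\frac1x\varphi^*_\sigma(xj))$. For a positive sequence $M$, $\omega_M(t)=\sup_k\log(t^kM_0/M_k)$ ($t>0$), $\omega_M(0)=0$. $\Lambda^{\{\mathfrak{M}_\sigma\}}$ is the inductive limit over $k\in\mathbb{N}_{\ge1}$ of the Banach spaces $\Lambda^k=\{a\in\mathbb{C}^{\mathbb{N}}:\|a\|_k=\sup_j|a_j|/(k^jS^{(k)}_j)<\infty\}$. $\mathcal{H}(\mathbb{C})$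 denotes the entire functions. *)

theory Defs
  imports "HOL-Complex_Analysis.Complex_Analysis" "HOL-Library.Landau_Symbols"
begin

definition pre_weight :: "(real \<Rightarrow> real) \<Rightarrow> bool" where
  "pre_weight \<sigma> \<longleftrightarrow>
     continuous_on {0..} \<sigma> \<and> mono_on {0..} \<sigma> \<and> \<sigma> 0 = 0 \<and>
     (\<forall>t\<ge>0. \<sigma> t \<ge> 0) \<and> filterlim \<sigma> at_top at_top \<and>
     (\<lambda>t. ln t) \<in> o[at_top](\<sigma>) \<and> convex_on UNIV (\<lambda>t. \<sigma> (exp t))"

definition phi_star :: "(real \<Rightarrow> real) \<Rightarrow> real \<Rightarrow> real" where
  "phi_star \<sigma> x = (SUP y\<in>{0..}. x * y - \<sigma> (exp y))"

definition Sseq :: "(real \<Rightarrow> real) \<Rightarrow> real \<Rightarrow> nat \<Rightarrow> real" where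
  "Sseq \<sigma> x j = exp (phi_star \<sigma> (x * real j) / x)"

definition omega_M :: "(nat \<Rightarrow> real) \<Rightarrow> real \<Rightarrow> real" where
  "omega_M M t = (if t = 0 then 0 else (SUP k. ln (t ^ k * M 0 / M k)))"

definition step_ratio :: "(real \<Rightarrow> real) \<Rightarrow> nat \<Rightarrow> (nat \<Rightarrow> complex) \<Rightarrow> nat \<Rightarrow> real" where
  "step_ratio \<sigma> k a j = cmod (a j) / (real k ^ j * Sseq \<sigma> (real k) j)"

definition Lam_step :: "(real \<Rightarrow> real) \<Rightarrow> nat \<Rightarrow> (nat \<Rightarrow> complex) set" where
  "Lam_step \<sigma> k = {a. bdd_above (range (step_ratio \<sigma> k a))}"

definition Lam_norm :: "(real \<Rightarrow> real) \<Rightarrow> nat \<Rightarrow> (nat \<Rightarrow> complex) \<Rightarrow> real" where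
  "Lam_norm \<sigma> k a = (SUP j. step_ratio \<sigma> k a j)"

definition Lam :: "(real \<Rightarrow> real) \<Rightarrow> (nat \<Rightarrow> complex) set" where
  "Lam \<sigma> = (\<Union>k\<in>{1..}. Lam_step \<sigma> k)"

text \<open>Continuous seminorms for the locally convex inductive limit topology:
  seminorms on Lam whose restriction to every step Lam^k is continuous.
  These generate the inductive limit topology.\<close>
definition LB_cont_seminorm :: "(real \<Rightarrow> real) \<Rightarrow> ((nat \<Rightarrow> complex) \<Rightarrow> real) \<Rightarrow> bool" where
  "LB_cont_seminorm \<sigma> p \<longleftrightarrow>
     (\<forall>a\<in>Lam \<sigma>. \<forall>b\<in>Lam \<sigma>. p (\<lambda>i. a i + b i) \<le> p a + p b) \<and>
     (\<forall>a\<in>Lam \<sigma>. \<forall>c::complex. p (\<lambda>i. c * a i) = cmod c * p a) \<and>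
     (\<forall>k\<ge>1. \<exists>C. \<forall>a\<in>Lam_step \<sigma> k. p a \<le> C * Lam_norm \<sigma> k a)"

definition LB_bounded :: "(real \<Rightarrow> real) \<Rightarrow> (nat \<Rightarrow> complex) set \<Rightarrow> bool" where
  "LB_bounded \<sigma> B \<longleftrightarrow> B \<subseteq> Lam \<sigma> \<and>
     (\<forall>p. LB_cont_seminorm \<sigma> p \<longrightarrow> bdd_above (p ` B))"

definition LB_dual :: "(real \<Rightarrow> real) \<Rightarrow> ((nat \<Rightarrow> complex) \<Rightarrow> complex) set" where
  "LB_dual \<sigma> = {T.
     (\<forall>a\<in>Lam \<sigma>. \<forall>b\<in>Lam \<sigma>. T (\<lambda>i. a i + b i) = T a + T b) \<and>
     (\<forall>a\<in>Lam \<sigma>. \<forall>c. T (\<lambda>i. c * a i) = c * T a) \<and>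
     (\<forall>k\<ge>1. \<exists>C. \<forall>a\<in>Lam_step \<sigma> k. cmod (T a) \<le> C * Lam_norm \<sigma> k a) \<and>
     (\<forall>a. a \<notin> Lam \<sigma> \<longrightarrow> T a = 0)}"

text \<open>Seminorms of the strong dual topology: sup over a bounded set.\<close>
definition dual_seminorm :: "(nat \<Rightarrow> complex) set \<Rightarrow> ((nat \<Rightarrow> complex) \<Rightarrow> complex) \<Rightarrow> real" where
  "dual_seminorm B T = Sup (insert 0 ((\<lambda>a. cmod (T a)) ` B))"

definition A0 :: "(real \<Rightarrow> real) \<Rightarrow> (complex \<Rightarrow> complex) set" where
  "A0 \<sigma> = {f. f holomorphic_on UNIV \<and>
     (\<forall>n::nat\<ge>1. \<exists>A>0. \<forall>z. cmod (f z) \<le> A * exp (omega_M (Sseq \<sigma> (real n)) (cmod z / real n)))}"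

definition A0_seminorm :: "(real \<Rightarrow> real) \<Rightarrow> nat \<Rightarrow> (complex \<Rightarrow> complex) \<Rightarrow> real" where
  "A0_seminorm \<sigma> n f =
     (SUP z. cmod (f z) * exp (- omega_M (Sseq \<sigma> (real n)) (cmod z / real n)))"

definition sn_continuous ::
  "'x set \<Rightarrow> 'i set \<Rightarrow> ('i \<Rightarrow> 'x \<Rightarrow> real) \<Rightarrow> 'j set \<Rightarrow> ('j \<Rightarrow> 'y \<Rightarrow> real) \<Rightarrow> ('x \<Rightarrow> 'y) \<Rightarrow> bool" where
  "sn_continuous X I p J q f \<longleftrightarrow>
     (\<forall>j\<in>J. \<exists>F. F \<subseteq> I \<and> finite F \<and> (\<exists>C. \<forall>x\<in>X. q j (f x) \<le> C * (\<Sum>i\<in>F. p i x)))"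

definition unit_vec :: "nat \<Rightarrow> nat \<Rightarrow> complex" where
  "unit_vec j = (\<lambda>i. if i = j then 1 else 0)"

definition Phi :: "((nat \<Rightarrow> complex) \<Rightarrow> complex) \<Rightarrow> complex \<Rightarrow> complex" where
  "Phi T = (\<lambda>z. \<Sum>j. T (unit_vec j) * z ^ j)"

end

theory Submission
  imports Defs
begin


lemma pw_nonneg: "pre_weight \<sigma> \<Longrightarrow> t \<ge> 0 \<Longrightarrow> \<sigma> t \<ge> 0"
  unfolding pre_weight_def by blast

lemma pw_superlin:
  assumes pw: "pre_weight \<sigma>" and c: "c > 0"
  shows "\<exists>Y\<ge>0. \<forall>y\<ge>Y. y \<le> c * \<sigma> (exp y)"
proof -
  have "(\<lambda>t. ln t) \<in> o[at_top](\<sigma>)" using pw unfolding pre_weight_def by blast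
  from landau_o.smallD[OF this c]
  have "eventually (\<lambda>t. norm (ln t) \<le> c * norm (\<sigma> t)) at_top" .
  then obtain T where T: "\<And>t. t \<ge> T \<Longrightarrow> norm (ln t) \<le> c * norm (\<sigma> t)"
    by (auto simp: eventually_at_top_linorder)
  show ?thesis
  proof (intro exI[of _ "max 0 (ln (max T 1))"] conjI allI impI)
    fix y assume y: "max 0 (ln (max T 1)) \<le> y"
    have "exp y \<ge> T"
      using y by (metis exp_ln less_max_iff_disj max.boundedE max.cobounded1 order_trans zero_less_one exp_le_cancel_iff)
    from T[OF this] have "norm y \<le> c * norm (\<sigma> (exp y))" by simp
    moreover have "\<sigma> (exp y) \<ge> 0" by (rule pw_nonneg[OF pw]) simp
    ultimately show "y \<le> c * \<sigma> (exp y)" by simp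
  qed simp
qed

lemma phi_bdd:
  assumes pw: "pre_weight \<sigma>"
  shows "bdd_above ((\<lambda>y. x * y - \<sigma> (exp y)) ` {0..})"
proof -
  have c: "1 / (\<bar>x\<bar> + 1) > (0::real)" by (simp add: add_pos_nonneg)
  obtain Y where Y: "Y \<ge> 0" "\<And>y. y \<ge> Y \<Longrightarrow> y \<le> (1 / (\<bar>x\<bar> + 1)) * \<sigma> (exp y)"
    using pw_superlin[OF pw c] by blast
  show ?thesis
  proof (rule bdd_aboveI2)
    fix y :: real assume y: "y \<in> {0..}"
    have s: "\<sigma> (exp y) \<ge> 0" by (rule pw_nonneg[OF pw]) simp
    show "x * y - \<sigma> (exp y) \<le> \<bar>x\<bar> * Y"
    proof (cases "y \<ge> Y")
      case True
      from Y(2)[OF True] have "(\<bar>x\<bar> + 1) * y \<le> \<sigma> (exp y)"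
        by (simp add: field_simps)
      moreover have "x * y \<le> \<bar>x\<bar> * y" using y by (simp add: mult_right_mono)
      moreover have "(\<bar>x\<bar> + 1) * y = \<bar>x\<bar> * y + y" by (simp add: algebra_simps)
      moreover have "\<bar>x\<bar> * Y \<ge> 0" using Y(1) by simp
      ultimately show ?thesis using y by simp
    next
      case False
      have "x * y \<le> \<bar>x\<bar> * y" using y by (simp add: mult_right_mono)
      also have "\<dots> \<le> \<bar>x\<bar> * Y" using False by (intro mult_left_mono) auto
      finally have "x * y \<le> \<bar>x\<bar> * Y" .
      then show ?thesis using s by linarith
    qed
  qed
qed

lemma phi_ge: "pre_weight \<sigma> \<Longrightarrow> y \<ge> 0 \<Longrightarrow> x * y - \<sigma> (exp y) \<le> phi_star \<sigma> x"
  unfolding phi_star_def by (rule cSUP_upper) (auto intro: phi_bdd)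

lemma phi_lt: "pre_weight \<sigma> \<Longrightarrow> e > 0 \<Longrightarrow> \<exists>y\<ge>0. phi_star \<sigma> x - e < x * y - \<sigma> (exp y)"
  unfolding phi_star_def
  using less_cSUP_iff[of "{0..}" "\<lambda>y. x * y - \<sigma> (exp y)" "(SUP y\<in>{0..}. x * y - \<sigma> (exp y)) - e"]
    phi_bdd[of \<sigma> x] by auto

lemma phi_le: "(\<And>y. y \<ge> 0 \<Longrightarrow> x * y - \<sigma> (exp y) \<le> c) \<Longrightarrow> phi_star \<sigma> x \<le> c"
  unfolding phi_star_def by (rule cSUP_least) auto

lemma Sseq_pos [simp]: "Sseq \<sigma> x j > 0" by (simp add: Sseq_def)
lemma Sseq_nz [simp]: "Sseq \<sigma> x j \<noteq> 0" by (simp add: Sseq_def)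

lemma Sseq_mono:
  assumes pw: "pre_weight \<sigma>" and m: "0 < m" "m \<le> k"
  shows "Sseq \<sigma> m j \<le> Sseq \<sigma> k j"
proof -
  have k: "k > 0" using m by simp
  have "phi_star \<sigma> (m * real j) \<le> (m / k) * phi_star \<sigma> (k * real j)"
  proof (rule phi_le)
    fix y :: real assume y: "y \<ge> 0"
    have s: "\<sigma> (exp y) \<ge> 0" by (rule pw_nonneg[OF pw]) simp
    have "m * real j * y - \<sigma> (exp y) \<le> (m / k) * (k * real j * y - \<sigma> (exp y))"
    proof -
      have "(m/k) * \<sigma> (exp y) \<le> 1 * \<sigma> (exp y)" using m k s
        by (intro mult_right_mono) (auto simp: divide_le_eq_1)
      then show ?thesis using k by (simp add: algebra_simps)
    qed
    also have "\<dots> \<le> (m / k) * phi_star \<sigma> (k * real j)"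
      using phi_ge[OF pw y, of "k * real j"] m k by (intro mult_left_mono) auto
    finally show "m * real j * y - \<sigma> (exp y) \<le> (m / k) * phi_star \<sigma> (k * real j)" .
  qed
  then have "phi_star \<sigma> (m * real j) / m \<le> phi_star \<sigma> (k * real j) / k"
    using m k by (simp add: field_simps)
  then show ?thesis unfolding Sseq_def by simp
qed

definition wt :: "(real \<Rightarrow> real) \<Rightarrow> nat \<Rightarrow> nat \<Rightarrow> real" where
  "wt \<sigma> k j = real k ^ j * Sseq \<sigma> (real k) j"

lemma wt_pos: "k \<ge> 1 \<Longrightarrow> wt \<sigma> k j > 0"
  unfolding wt_def by (simp add: Sseq_pos)

lemma wt_mono: "pre_weight \<sigma> \<Longrightarrow> 1 \<le> m \<Longrightarrow> m \<le> k \<Longrightarrow> wt \<sigma> m j \<le> wt \<sigma> k j"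
  unfolding wt_def
  by (intro mult_mono power_mono Sseq_mono) (auto simp: Sseq_pos less_imp_le)

lemma wt_double:
  assumes "pre_weight \<sigma>" "k \<ge> 1"
  shows "2 ^ j * wt \<sigma> k j \<le> wt \<sigma> (2 * k) j"
proof -
  have "Sseq \<sigma> (real k) j \<le> Sseq \<sigma> (real (2 * k)) j"
    using assms by (intro Sseq_mono) auto
  then have "2 ^ j * (real k ^ j * Sseq \<sigma> (real k) j) \<le> 2 ^ j * (real k ^ j * Sseq \<sigma> (real (2 * k)) j)"
    by (intro mult_left_mono) auto
  then show ?thesis unfolding wt_def by (simp add: power_mult_distrib)
qed


lemma ln_Sseq: "ln (Sseq \<sigma> x j) = phi_star \<sigma> (x * real j) / x"
  by (simp add: Sseq_def)

lemma omega_term_bound: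
  assumes pw: "pre_weight \<sigma>" and n: "n \<ge> 1" and t: "t > 0"
  shows "ln (t ^ k * Sseq \<sigma> (real n) 0 / Sseq \<sigma> (real n) k)
           \<le> ln (Sseq \<sigma> (real n) 0) + \<sigma> (max t 1) / real n"
proof -
  define s where "s = max t 1"
  have s1: "s \<ge> 1" by (simp add: s_def)
  have ph: "real n * real k * ln s - \<sigma> (exp (ln s)) \<le> phi_star \<sigma> (real n * real k)"
    by (rule phi_ge[OF pw]) (use s1 in simp)
  then have ph': "real n * (real k * ln s) - \<sigma> s \<le> phi_star \<sigma> (real n * real k)"
    using s1 by (simp add: mult.assoc)
  have np: "real n > 0" using n by simp
  have ph2: "real k * ln s - \<sigma> s / real n \<le> phi_star \<sigma> (real n * real k) / real n"
  proof -
    have "real k * ln s - \<sigma> s / real n = (real n * (real k * ln s) - \<sigma> s) / real n"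
      using np by (simp add: field_simps)
    also have "\<dots> \<le> phi_star \<sigma> (real n * real k) / real n"
      using ph' np by (intro divide_right_mono) auto
    finally show ?thesis .
  qed
  have lt: "ln t \<le> ln s" using t by (simp add: s_def)
  have "real k * ln t \<le> real k * ln s" using lt by (intro mult_left_mono) auto
  have eq: "ln (t ^ k * Sseq \<sigma> (real n) 0 / Sseq \<sigma> (real n) k)
      = real k * ln t + ln (Sseq \<sigma> (real n) 0) - phi_star \<sigma> (real n * real k) / real n"
    using t by (simp add: ln_mult ln_div ln_realpow Sseq_pos ln_Sseq del: Sseq_def)
  show ?thesis unfolding eq s_def[symmetric]
    using ph2 \<open>real k * ln t \<le> real k * ln s\<close> by linarith
qed

lemma omega_bdd:
  assumes pw: "pre_weight \<sigma>" and n: "n \<ge> 1" and t: "t > 0"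
  shows "bdd_above (range (\<lambda>k. ln (t ^ k * Sseq \<sigma> (real n) 0 / Sseq \<sigma> (real n) k)))"
  using omega_term_bound[OF pw n t] by (intro bdd_aboveI2) auto

lemma omega_lower:
  assumes pw: "pre_weight \<sigma>" and n: "n \<ge> 1" and t: "t \<ge> 0"
  shows "t ^ j * Sseq \<sigma> (real n) 0 / Sseq \<sigma> (real n) j \<le> exp (omega_M (Sseq \<sigma> (real n)) t)"
proof (cases "t = 0")
  case True
  then show ?thesis by (cases j) (auto simp: omega_M_def)
next
  case False
  then have tp: "t > 0" using t by simp
  have "ln (t ^ j * Sseq \<sigma> (real n) 0 / Sseq \<sigma> (real n) j) \<le> omega_M (Sseq \<sigma> (real n)) t"
    unfolding omega_M_def using False by (simp del: Sseq_def) (rule cSUP_upper[OF _ omega_bdd[OF pw n tp]], simp)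
  then have "exp (ln (t ^ j * Sseq \<sigma> (real n) 0 / Sseq \<sigma> (real n) j)) \<le> exp (omega_M (Sseq \<sigma> (real n)) t)"
    by simp
  then show ?thesis using tp by (simp add: Sseq_pos del: Sseq_def)
qed

lemma omega_upper:
  assumes pw: "pre_weight \<sigma>" and n: "n \<ge> 1" and t: "t \<ge> 1"
  shows "omega_M (Sseq \<sigma> (real n)) t \<le> ln (Sseq \<sigma> (real n) 0) + \<sigma> t / real n"
proof -
  have "t \<noteq> 0" "t > 0" using t by auto
  then show ?thesis unfolding omega_M_def
    using omega_term_bound[OF pw n \<open>t > 0\<close>] t by (simp del: Sseq_def) (rule cSUP_least, auto simp: max_def)
qed



lemma cauchy_coeff:
  assumes pw: "pre_weight \<sigma>" and n: "n \<ge> 1" and hol: "f holomorphic_on UNIV"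
    and bnd: "\<And>z. cmod (f z) \<le> A * exp (omega_M (Sseq \<sigma> (real n)) (cmod z / real n))"
  shows "cmod ((deriv ^^ j) f 0 / fact j) \<le> exp 1 * A * Sseq \<sigma> (real n) 0 / wt \<sigma> n j"
proof -
  have np: "real n > 0" using n by simp
  obtain y where y0: "y \<ge> 0" and
    yl: "phi_star \<sigma> (real n * real j) - real n < real n * real j * y - \<sigma> (exp y)"
    using phi_lt[OF pw np, of "real n * real j"] by blast
  define M0 where "M0 = Sseq \<sigma> (real n) 0"
  define Mj where "Mj = Sseq \<sigma> (real n) j"
  have M0p: "M0 > 0" and Mjp: "Mj > 0" by (auto simp: M0_def Mj_def)
  have A0: "A \<ge> 0"
  proof -
    have "0 \<le> cmod (f 0)" by simp
    also have "\<dots> \<le> A * exp (omega_M (Sseq \<sigma> (real n)) (cmod 0 / real n))" by (rule bnd)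
    finally show ?thesis by (simp add: zero_le_mult_iff)
  qed
  define r where "r = real n * exp y"
  have rp: "r > 0" using np by (simp add: r_def)
  define B where "B = A * M0 * exp (\<sigma> (exp y) / real n)"
  have onc: "norm (f z) \<le> B" if "norm (0 - z) = r" for z
  proof -
    have zn: "cmod z / real n = exp y" using that np by (simp add: r_def)
    have "cmod (f z) \<le> A * exp (omega_M (Sseq \<sigma> (real n)) (exp y))" using bnd[of z] zn by simp
    also have "\<dots> \<le> A * exp (ln M0 + \<sigma> (exp y) / real n)"
      using omega_upper[OF pw n, of "exp y"] y0 A0 unfolding M0_def
      by (intro mult_left_mono) auto
    also have "\<dots> = B" using M0p by (simp add: B_def exp_add)
    finally show ?thesis by simp
  qed
  have C: "norm ((deriv ^^ j) f 0) \<le> fact j * B / r ^ j"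
    by (rule Cauchy_inequality[OF _ _ rp onc])
       (auto intro: holomorphic_on_subset[OF hol] holomorphic_on_imp_continuous_on)
  then have C': "cmod ((deriv ^^ j) f 0 / fact j) \<le> B / r ^ j"
    by (simp add: norm_divide divide_le_eq field_simps)
  have key: "\<sigma> (exp y) / real n - real j * y < 1 - ln Mj"
  proof -
    have "ln Mj = phi_star \<sigma> (real n * real j) / real n" by (simp add: Mj_def ln_Sseq)
    moreover have "phi_star \<sigma> (real n * real j) / real n - 1 < real j * y - \<sigma> (exp y) / real n"
    proof -
      have "(phi_star \<sigma> (real n * real j) - real n) / real n < (real n * real j * y - \<sigma> (exp y)) / real n"
        using yl np by (intro divide_strict_right_mono) auto
      then show ?thesis using np by (simp add: field_simps)
    qed
    ultimately show ?thesis by linarith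
  qed
  have rj: "r ^ j = real n ^ j * exp (real j * y)"
    by (simp add: r_def power_mult_distrib exp_of_nat_mult)
  have ee: "exp (\<sigma> (exp y) / real n) = exp (\<sigma> (exp y) / real n - real j * y) * exp (real j * y)"
    by (simp add: exp_diff)
  have "B / r ^ j = A * M0 / real n ^ j * exp (\<sigma> (exp y) / real n - real j * y)"
    unfolding rj B_def by (subst ee) (simp add: field_simps)
  also have "\<dots> \<le> A * M0 / real n ^ j * exp (1 - ln Mj)"
    using key A0 M0p np by (intro mult_left_mono) auto
  also have "\<dots> = exp 1 * A * M0 / wt \<sigma> n j"
    using Mjp np by (simp add: exp_diff wt_def Mj_def field_simps)
  finally show ?thesis using C' by (simp add: M0_def)
qed

lemma series_bound:
  assumes pw: "pre_weight \<sigma>" and n: "n \<ge> 1"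
    and cb: "\<And>j. cmod (c j) \<le> D / wt \<sigma> (2 * n) j"
  shows "summable (\<lambda>j. cmod (c j * z ^ j))"
    and "cmod (\<Sum>j. c j * z ^ j) \<le> 2 * D * exp (omega_M (Sseq \<sigma> (real n)) (cmod z / real n)) / Sseq \<sigma> (real n) 0"
proof -
  define E where "E = exp (omega_M (Sseq \<sigma> (real n)) (cmod z / real n))"
  define M0 where "M0 = Sseq \<sigma> (real n) 0"
  have np: "real n > 0" using n by simp
  have M0p: "M0 > 0" by (simp add: M0_def)
  have D0: "D \<ge> 0"
  proof -
    have "0 \<le> cmod (c 0)" by simp
    also have "\<dots> \<le> D / wt \<sigma> (2 * n) 0" by (rule cb)
    finally show ?thesis using wt_pos[of "2*n" \<sigma> 0] n by (simp add: zero_le_divide_iff)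
  qed
  have tb: "cmod (c j * z ^ j) \<le> D * E / M0 * (1/2) ^ j" for j
  proof -
    have w1: "wt \<sigma> n j > 0" using wt_pos n by auto
    have w2: "wt \<sigma> (2*n) j > 0" using wt_pos n by auto
    have om: "(cmod z / real n) ^ j * M0 / Sseq \<sigma> (real n) j \<le> E"
      unfolding E_def M0_def by (rule omega_lower[OF pw n]) simp
    have "cmod (c j * z ^ j) = cmod (c j) * cmod z ^ j" by (simp add: norm_mult norm_power)
    also have "\<dots> \<le> D / wt \<sigma> (2 * n) j * cmod z ^ j" by (intro mult_right_mono cb) auto
    also have "\<dots> \<le> D / (2 ^ j * wt \<sigma> n j) * cmod z ^ j"
      using wt_double[OF pw n, of j] D0 w1 w2
      by (intro mult_right_mono divide_left_mono) auto
    also have "\<dots> = D * (1/2) ^ j * ((cmod z / real n) ^ j / Sseq \<sigma> (real n) j)"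
      by (simp add: wt_def power_divide field_simps)
    also have "\<dots> \<le> D * (1/2) ^ j * (E / M0)"
    proof -
      have "(cmod z / real n) ^ j / Sseq \<sigma> (real n) j \<le> E / M0"
        using om M0p by (simp add: field_simps)
      then show ?thesis using D0 by (intro mult_left_mono) auto
    qed
    finally show ?thesis by (simp add: field_simps)
  qed
  have sg: "summable (\<lambda>j. D * E / M0 * (1/2::real) ^ j)"
    by (intro summable_mult summable_geometric) simp
  show sm: "summable (\<lambda>j. cmod (c j * z ^ j))"
    by (rule summable_comparison_test[OF _ sg]) (use tb in auto)
  have "cmod (\<Sum>j. c j * z ^ j) \<le> (\<Sum>j. cmod (c j * z ^ j))"
    by (rule summable_norm[OF sm])
  also have "\<dots> \<le> (\<Sum>j. D * E / M0 * (1/2::real) ^ j)"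
    by (rule suminf_le[OF tb sm sg])
  also have "\<dots> = D * E / M0 * (\<Sum>j. (1/2::real) ^ j)"
    by (rule suminf_mult) (rule summable_geometric, simp)
  also have "\<dots> = D * E / M0 * 2"
    by (subst suminf_geometric) auto
  finally show "cmod (\<Sum>j. c j * z ^ j) \<le> 2 * D * exp (omega_M (Sseq \<sigma> (real n)) (cmod z / real n)) / Sseq \<sigma> (real n) 0"
    by (simp add: E_def M0_def field_simps)
qed



lemma sr_wt: "step_ratio \<sigma> k a j = cmod (a j) / wt \<sigma> k j"
  by (simp add: step_ratio_def wt_def)

lemma sr_nonneg: "step_ratio \<sigma> k a j \<ge> 0"
  unfolding step_ratio_def by (intro divide_nonneg_nonneg mult_nonneg_nonneg) (auto intro: less_imp_le)

lemma Lam_stepI: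
  assumes "k \<ge> 1" "\<And>j. cmod (a j) \<le> L * wt \<sigma> k j"
  shows "a \<in> Lam_step \<sigma> k"
  unfolding Lam_step_def
proof (intro CollectI bdd_aboveI2)
  fix j
  have "wt \<sigma> k j > 0" using assms(1) by (rule wt_pos)
  then show "step_ratio \<sigma> k a j \<le> L" unfolding sr_wt using assms(2)[of j]
    by (simp add: divide_le_eq)
qed

lemma sr_le_norm: "a \<in> Lam_step \<sigma> k \<Longrightarrow> step_ratio \<sigma> k a j \<le> Lam_norm \<sigma> k a"
  unfolding Lam_step_def Lam_norm_def by (auto intro: cSUP_upper)

lemma Lam_norm_le: "(\<And>j. step_ratio \<sigma> k a j \<le> c) \<Longrightarrow> Lam_norm \<sigma> k a \<le> c"
  unfolding Lam_norm_def by (rule cSUP_least) auto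

lemma Lam_norm_nonneg: "a \<in> Lam_step \<sigma> k \<Longrightarrow> 0 \<le> Lam_norm \<sigma> k a"
  using sr_le_norm[of a \<sigma> k 0] sr_nonneg[of \<sigma> k a 0] by linarith

lemma abs_le_norm:
  assumes "k \<ge> 1" "a \<in> Lam_step \<sigma> k"
  shows "cmod (a j) \<le> Lam_norm \<sigma> k a * wt \<sigma> k j"
proof -
  have "wt \<sigma> k j > 0" using assms(1) by (rule wt_pos)
  then show ?thesis using sr_le_norm[OF assms(2), of j] unfolding sr_wt
    by (simp add: divide_le_eq)
qed

lemma Lam_iff: "a \<in> Lam \<sigma> \<longleftrightarrow> (\<exists>k\<ge>1. a \<in> Lam_step \<sigma> k)"
  unfolding Lam_def by auto

lemma Lam_step_mono:
  assumes pw: "pre_weight \<sigma>" and km: "1 \<le> k" "k \<le> m" and a: "a \<in> Lam_step \<sigma> k"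
  shows "a \<in> Lam_step \<sigma> m"
proof (rule Lam_stepI[of m _ "Lam_norm \<sigma> k a"])
  show "1 \<le> m" using km by simp
  fix j
  have "cmod (a j) \<le> Lam_norm \<sigma> k a * wt \<sigma> k j" by (rule abs_le_norm[OF km(1) a])
  also have "\<dots> \<le> Lam_norm \<sigma> k a * wt \<sigma> m j"
    by (intro mult_left_mono wt_mono[OF pw] Lam_norm_nonneg[OF a]) (use km in auto)
  finally show "cmod (a j) \<le> Lam_norm \<sigma> k a * wt \<sigma> m j" .
qed

lemma Lam_add:
  assumes pw: "pre_weight \<sigma>" and a: "a \<in> Lam \<sigma>" and b: "b \<in> Lam \<sigma>"
  shows "(\<lambda>i. a i + b i) \<in> Lam \<sigma>"
proof -
  obtain k where k: "k \<ge> 1" "a \<in> Lam_step \<sigma> k" using a by (auto simp: Lam_iff)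
  obtain m where m: "m \<ge> 1" "b \<in> Lam_step \<sigma> m" using b by (auto simp: Lam_iff)
  let ?p = "max k m"
  have a': "a \<in> Lam_step \<sigma> ?p" by (rule Lam_step_mono[OF pw k(1) _ k(2)]) simp
  have b': "b \<in> Lam_step \<sigma> ?p" by (rule Lam_step_mono[OF pw m(1) _ m(2)]) simp
  have p1: "?p \<ge> 1" using k by simp
  have "(\<lambda>i. a i + b i) \<in> Lam_step \<sigma> ?p"
  proof (rule Lam_stepI[OF p1, of _ "Lam_norm \<sigma> ?p a + Lam_norm \<sigma> ?p b"])
    fix j
    have "cmod (a j + b j) \<le> cmod (a j) + cmod (b j)" by (rule norm_triangle_ineq)
    also have "\<dots> \<le> Lam_norm \<sigma> ?p a * wt \<sigma> ?p j + Lam_norm \<sigma> ?p b * wt \<sigma> ?p j"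
      by (intro add_mono abs_le_norm p1 a' b')
    finally show "cmod (a j + b j) \<le> (Lam_norm \<sigma> ?p a + Lam_norm \<sigma> ?p b) * wt \<sigma> ?p j"
      by (simp add: algebra_simps)
  qed
  then show ?thesis using p1 by (auto simp: Lam_iff)
qed

lemma Lam_step_scale:
  assumes k: "k \<ge> 1" and a: "a \<in> Lam_step \<sigma> k"
  shows "(\<lambda>i. c * a i) \<in> Lam_step \<sigma> k"
proof (rule Lam_stepI[OF k, of _ "cmod c * Lam_norm \<sigma> k a"])
  fix j
  have "cmod (c * a j) = cmod c * cmod (a j)" by (simp add: norm_mult)
  also have "\<dots> \<le> cmod c * (Lam_norm \<sigma> k a * wt \<sigma> k j)"
    by (intro mult_left_mono abs_le_norm k a) auto
  finally show "cmod (c * a j) \<le> cmod c * Lam_norm \<sigma> k a * wt \<sigma> k j" by (simp add: mult.assoc)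
qed

lemma Lam_scale: "a \<in> Lam \<sigma> \<Longrightarrow> (\<lambda>i. c * a i) \<in> Lam \<sigma>"
  using Lam_step_scale by (auto simp: Lam_iff)

lemma Lam_fin:
  assumes k: "k \<ge> 1" and fin: "\<And>j. j \<ge> N \<Longrightarrow> a j = 0"
  shows "a \<in> Lam_step \<sigma> k"
proof (rule Lam_stepI[OF k, of _ "\<Sum>i<N. cmod (a i) / wt \<sigma> k i"])
  fix j
  have wp: "wt \<sigma> k j > 0" using k by (rule wt_pos)
  show "cmod (a j) \<le> (\<Sum>i<N. cmod (a i) / wt \<sigma> k i) * wt \<sigma> k j"
  proof (cases "j < N")
    case True
    have "cmod (a j) / wt \<sigma> k j \<le> (\<Sum>i<N. cmod (a i) / wt \<sigma> k i)"
      by (rule member_le_sum) (use True wt_pos[OF k] in \<open>auto intro: divide_nonneg_pos\<close>)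
    then show ?thesis using wp by (simp add: divide_le_eq)
  next
    case False
    then have "a j = 0" using fin by simp
    moreover have "0 \<le> (\<Sum>i<N. cmod (a i) / wt \<sigma> k i)"
      by (intro sum_nonneg) (use wt_pos[OF k] in \<open>auto intro: divide_nonneg_pos\<close>)
    ultimately show ?thesis using wp by simp
  qed
qed

lemma unit_vec_step: "k \<ge> 1 \<Longrightarrow> unit_vec j \<in> Lam_step \<sigma> k"
  by (rule Lam_fin[of k "Suc j"]) (auto simp: unit_vec_def)

lemma unit_vec_Lam: "unit_vec j \<in> Lam \<sigma>"
  using unit_vec_step[of 1 j \<sigma>] by (auto simp: Lam_iff)

lemma Lam_norm_unit: "k \<ge> 1 \<Longrightarrow> Lam_norm \<sigma> k (unit_vec j) \<le> 1 / wt \<sigma> k j"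
  by (rule Lam_norm_le) (use wt_pos[of k \<sigma> j] in \<open>auto simp: sr_wt unit_vec_def\<close>)

lemma dual_add: "T \<in> LB_dual \<sigma> \<Longrightarrow> a \<in> Lam \<sigma> \<Longrightarrow> b \<in> Lam \<sigma> \<Longrightarrow> T (\<lambda>i. a i + b i) = T a + T b"
  unfolding LB_dual_def by blast
lemma dual_scale: "T \<in> LB_dual \<sigma> \<Longrightarrow> a \<in> Lam \<sigma> \<Longrightarrow> T (\<lambda>i. c * a i) = c * T a"
  unfolding LB_dual_def by blast
lemma dual_bound: "T \<in> LB_dual \<sigma> \<Longrightarrow> k \<ge> 1 \<Longrightarrow> \<exists>C. \<forall>a\<in>Lam_step \<sigma> k. cmod (T a) \<le> C * Lam_norm \<sigma> k a"
  unfolding LB_dual_def by blast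
lemma dual_out: "T \<in> LB_dual \<sigma> \<Longrightarrow> a \<notin> Lam \<sigma> \<Longrightarrow> T a = 0"
  unfolding LB_dual_def by blast

lemma dual_bound':
  assumes "T \<in> LB_dual \<sigma>" "k \<ge> 1"
  obtains C where "C \<ge> 0" "\<And>a. a \<in> Lam_step \<sigma> k \<Longrightarrow> cmod (T a) \<le> C * Lam_norm \<sigma> k a"
proof -
  obtain C where C: "\<forall>a\<in>Lam_step \<sigma> k. cmod (T a) \<le> C * Lam_norm \<sigma> k a"
    using dual_bound[OF assms] by blast
  show ?thesis
  proof (rule that[of "max C 0"])
    fix a assume a: "a \<in> Lam_step \<sigma> k"
    have "cmod (T a) \<le> C * Lam_norm \<sigma> k a" using C a by blast
    also have "\<dots> \<le> max C 0 * Lam_norm \<sigma> k a"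
      by (intro mult_right_mono Lam_norm_nonneg[OF a]) simp
    finally show "cmod (T a) \<le> max C 0 * Lam_norm \<sigma> k a" .
  qed simp
qed

lemma dual_coeff:
  assumes "T \<in> LB_dual \<sigma>" "k \<ge> 1"
  obtains D where "\<And>j. cmod (T (unit_vec j)) \<le> D / wt \<sigma> k j"
proof -
  obtain C where C: "C \<ge> 0" "\<And>a. a \<in> Lam_step \<sigma> k \<Longrightarrow> cmod (T a) \<le> C * Lam_norm \<sigma> k a"
    using dual_bound'[OF assms] by blast
  show ?thesis
  proof (rule that[of C])
    fix j
    have "cmod (T (unit_vec j)) \<le> C * Lam_norm \<sigma> k (unit_vec j)"
      by (rule C(2)[OF unit_vec_step[OF assms(2)]])
    also have "\<dots> \<le> C * (1 / wt \<sigma> k j)"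
      by (intro mult_left_mono Lam_norm_unit assms(2) C(1))
    finally show "cmod (T (unit_vec j)) \<le> C / wt \<sigma> k j" by simp
  qed
qed

lemma Phi_summable:
  assumes pw: "pre_weight \<sigma>" and T: "T \<in> LB_dual \<sigma>"
  shows "summable (\<lambda>j. T (unit_vec j) * z ^ j)"
proof -
  obtain D where "\<And>j. cmod (T (unit_vec j)) \<le> D / wt \<sigma> (2 * 1) j"
    using dual_coeff[OF T, of "2 * 1"] by auto
  from series_bound(1)[OF pw _ this] show ?thesis by (auto intro: summable_norm_cancel)
qed

lemma Phi_holo:
  assumes pw: "pre_weight \<sigma>" and T: "T \<in> LB_dual \<sigma>"
  shows "Phi T holomorphic_on UNIV"
proof -
  have "Phi T field_differentiable (at w)" for w
  proof -
    have "Phi T holomorphic_on ball 0 (norm w + 1)"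
      by (rule power_series_holomorphic[where a = "\<lambda>j. T (unit_vec j)"])
         (auto simp: Phi_def intro!: summable_sums Phi_summable[OF pw T])
    then show ?thesis by (rule holomorphic_on_imp_differentiable_at) auto
  qed
  then show ?thesis unfolding holomorphic_on_def
    by (auto intro: field_differentiable_at_within)
qed

lemma Phi_A0:
  assumes pw: "pre_weight \<sigma>" and T: "T \<in> LB_dual \<sigma>"
  shows "Phi T \<in> A0 \<sigma>"
  unfolding A0_def
proof (intro CollectI conjI allI impI)
  show "Phi T holomorphic_on UNIV" by (rule Phi_holo[OF pw T])
  fix n :: nat assume n: "n \<ge> 1"
  obtain D where D: "\<And>j. cmod (T (unit_vec j)) \<le> D / wt \<sigma> (2 * n) j"
    using dual_coeff[OF T, of "2 * n"] n by auto
  define M0 where "M0 = Sseq \<sigma> (real n) 0"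
  have M0p: "M0 > 0" by (simp add: M0_def)
  show "\<exists>A>0. \<forall>z. cmod (Phi T z) \<le> A * exp (omega_M (Sseq \<sigma> (real n)) (cmod z / real n))"
  proof (intro exI[of _ "max (2 * D / M0) 1"] conjI allI)
    fix z
    have "cmod (Phi T z) \<le> 2 * D * exp (omega_M (Sseq \<sigma> (real n)) (cmod z / real n)) / M0"
      unfolding Phi_def M0_def by (rule series_bound(2)[OF pw n D])
    also have "\<dots> = (2 * D / M0) * exp (omega_M (Sseq \<sigma> (real n)) (cmod z / real n))" by simp
    also have "\<dots> \<le> max (2 * D / M0) 1 * exp (omega_M (Sseq \<sigma> (real n)) (cmod z / real n))"
      by (intro mult_right_mono) auto
    finally show "cmod (Phi T z) \<le> max (2 * D / M0) 1 * exp (omega_M (Sseq \<sigma> (real n)) (cmod z / real n))" .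
  qed simp
qed

lemma unit_vec_sum: "(\<Sum>j<N. a j * unit_vec j i) = (if i < N then a i else 0)"
  by (simp add: unit_vec_def if_distrib[of "\<lambda>x. a _ * x"] sum.delta' cong: if_cong)

lemma dual_finsum:
  assumes T: "T \<in> LB_dual \<sigma>"
  shows "T (\<lambda>i. \<Sum>j<N. a j * unit_vec j i) = (\<Sum>j<N. a j * T (unit_vec j))"
proof (induction N)
  case 0
  have "T (\<lambda>i. 0 * unit_vec 0 i) = 0 * T (unit_vec 0)"
    by (rule dual_scale[OF T unit_vec_Lam])
  then show ?case by simp
next
  case (Suc N)
  have fin: "(\<lambda>i. \<Sum>j<N. a j * unit_vec j i) \<in> Lam \<sigma>"
    using Lam_fin[of 1 N "\<lambda>i. \<Sum>j<N. a j * unit_vec j i" \<sigma>]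
    by (auto simp: Lam_iff unit_vec_sum)
  have "T (\<lambda>i. \<Sum>j<Suc N. a j * unit_vec j i)
      = T (\<lambda>i. (\<Sum>j<N. a j * unit_vec j i) + (\<lambda>i. a N * unit_vec N i) i)" by simp
  also have "\<dots> = T (\<lambda>i. \<Sum>j<N. a j * unit_vec j i) + T (\<lambda>i. a N * unit_vec N i)"
    by (rule dual_add[OF T fin]) (rule Lam_scale[OF unit_vec_Lam])
  also have "\<dots> = (\<Sum>j<Suc N. a j * T (unit_vec j))"
    using Suc dual_scale[OF T unit_vec_Lam] by simp
  finally show ?case .
qed

lemma dual_expand:
  assumes pw: "pre_weight \<sigma>" and T: "T \<in> LB_dual \<sigma>" and a: "a \<in> Lam \<sigma>"
  shows "(\<lambda>j. a j * T (unit_vec j)) sums T a"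
proof -
  obtain k where k: "k \<ge> 1" "a \<in> Lam_step \<sigma> k" using a by (auto simp: Lam_iff)
  define L where "L = Lam_norm \<sigma> k a"
  have L0: "L \<ge> 0" unfolding L_def by (rule Lam_norm_nonneg[OF k(2)])
  have aL: "cmod (a j) \<le> L * wt \<sigma> k j" for j unfolding L_def by (rule abs_le_norm[OF k])
  have k2: "2 * k \<ge> 1" using k by simp
  obtain C where C: "C \<ge> 0" "\<And>b. b \<in> Lam_step \<sigma> (2 * k) \<Longrightarrow> cmod (T b) \<le> C * Lam_norm \<sigma> (2 * k) b"
    using dual_bound'[OF T k2] by blast
  define rest where "rest N = (\<lambda>i. if i < N then 0 else a i)" for N
  have rest_step: "rest N \<in> Lam_step \<sigma> (2 * k)" for N
  proof (rule Lam_stepI[OF k2, of _ L])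
    fix j
    have "cmod (rest N j) \<le> L * wt \<sigma> k j" using aL[of j] L0 wt_pos[OF k(1), of \<sigma> j]
      by (auto simp: rest_def)
    also have "\<dots> \<le> L * wt \<sigma> (2 * k) j" by (intro mult_left_mono wt_mono[OF pw] L0) (use k in auto)
    finally show "cmod (rest N j) \<le> L * wt \<sigma> (2 * k) j" .
  qed
  have rest_Lam: "rest N \<in> Lam \<sigma>" for N using rest_step[of N] k2 unfolding Lam_iff by blast
  have rest_norm: "Lam_norm \<sigma> (2 * k) (rest N) \<le> L * (1/2) ^ N" for N
  proof (rule Lam_norm_le)
    fix j
    show "step_ratio \<sigma> (2 * k) (rest N) j \<le> L * (1/2) ^ N"
    proof (cases "j < N")
      case True then show ?thesis using L0 by (simp add: sr_wt rest_def)
    next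
      case False
      have w1: "wt \<sigma> k j > 0" using k(1) by (rule wt_pos)
      have w2: "wt \<sigma> (2 * k) j > 0" using k2 by (rule wt_pos)
      have "step_ratio \<sigma> (2 * k) (rest N) j = cmod (a j) / wt \<sigma> (2 * k) j"
        using False by (simp add: sr_wt rest_def)
      also have "\<dots> \<le> L * wt \<sigma> k j / (2 ^ j * wt \<sigma> k j)"
        using aL[of j] wt_double[OF pw k(1), of j] w1 w2 L0
        by (intro frac_le) auto
      also have "\<dots> = L * (1/2) ^ j" using w1 by (simp add: power_one_over)
      also have "\<dots> \<le> L * (1/2) ^ N" using False L0
        by (intro mult_left_mono power_decreasing) auto
      finally show ?thesis .
    qed
  qed
  have split: "T a = (\<Sum>j<N. a j * T (unit_vec j)) + T (rest N)" for N
  proof -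
    have fin: "(\<lambda>i. \<Sum>j<N. a j * unit_vec j i) \<in> Lam \<sigma>"
      using Lam_fin[of 1 N "\<lambda>i. \<Sum>j<N. a j * unit_vec j i" \<sigma>]
      by (auto simp: Lam_iff unit_vec_sum)
    have "a = (\<lambda>i. (\<Sum>j<N. a j * unit_vec j i) + rest N i)"
      by (auto simp: unit_vec_sum rest_def)
    then have "T a = T (\<lambda>i. (\<Sum>j<N. a j * unit_vec j i) + rest N i)" by simp
    also have "\<dots> = T (\<lambda>i. \<Sum>j<N. a j * unit_vec j i) + T (rest N)"
      by (rule dual_add[OF T fin rest_Lam])
    finally show ?thesis using dual_finsum[OF T] by simp
  qed
  have "(\<lambda>N. (\<Sum>j<N. a j * T (unit_vec j)) - T a) \<longlonglongrightarrow> 0"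
  proof (rule Lim_null_comparison)
    show "\<forall>\<^sub>F N in sequentially. norm ((\<Sum>j<N. a j * T (unit_vec j)) - T a) \<le> C * (L * (1/2) ^ N)"
    proof (intro always_eventually allI)
      fix N
      have "norm ((\<Sum>j<N. a j * T (unit_vec j)) - T a) = cmod (T (rest N))"
        using split[of N] by (simp add: norm_minus_commute)
      also have "\<dots> \<le> C * Lam_norm \<sigma> (2 * k) (rest N)" by (rule C(2)[OF rest_step])
      also have "\<dots> \<le> C * (L * (1/2) ^ N)" by (intro mult_left_mono rest_norm C(1))
      finally show "norm ((\<Sum>j<N. a j * T (unit_vec j)) - T a) \<le> C * (L * (1/2) ^ N)" .
    qed
    show "(\<lambda>N. C * (L * (1/2::real) ^ N)) \<longlonglongrightarrow> 0"
      by (intro tendsto_mult_right_zero LIMSEQ_power_zero) auto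
  qed
  then show ?thesis unfolding sums_def by (rule LIM_zero_cancel)
qed

lemma coeff_unique:
  fixes a :: "nat \<Rightarrow> complex"
  assumes "\<And>z. summable (\<lambda>n. a n * z ^ n)"
  shows "a n = (deriv ^^ n) (\<lambda>z. \<Sum>k. a k * z ^ k) 0 / fact n"
proof -
  define F where "F = Abs_fps a"
  have r1: "fps_conv_radius F \<ge> norm (1::complex)"
    unfolding fps_conv_radius_def F_def using assms[of 1] by (intro conv_radius_geI) simp
  have r1': "1 \<le> fps_conv_radius F" using r1 by (simp add: one_ereal_def)
  have "0 < (1::ereal)" by simp
  then have "fps_conv_radius F > 0" using r1' by (rule order_less_le_trans)
  then have "eval_fps F has_fps_expansion F" by (rule eval_fps_has_fps_expansion)
  from fps_nth_fps_expansion[OF this, of n]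
  show ?thesis by (simp add: F_def eval_fps_def[abs_def])
qed

lemma Phi_inj:
  assumes pw: "pre_weight \<sigma>"
  shows "inj_on Phi (LB_dual \<sigma>)"
proof (rule inj_onI)
  fix T1 T2 assume T1: "T1 \<in> LB_dual \<sigma>" and T2: "T2 \<in> LB_dual \<sigma>" and eq: "Phi T1 = Phi T2"
  have c: "T1 (unit_vec n) = T2 (unit_vec n)" for n
  proof -
    have "T1 (unit_vec n) = (deriv ^^ n) (Phi T1) 0 / fact n"
      unfolding Phi_def by (rule coeff_unique) (rule Phi_summable[OF pw T1])
    also have "\<dots> = (deriv ^^ n) (Phi T2) 0 / fact n" using eq by simp
    also have "\<dots> = T2 (unit_vec n)"
      unfolding Phi_def by (rule coeff_unique[symmetric]) (rule Phi_summable[OF pw T2])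
    finally show ?thesis .
  qed
  show "T1 = T2"
  proof
    fix a
    show "T1 a = T2 a"
    proof (cases "a \<in> Lam \<sigma>")
      case True
      from dual_expand[OF pw T1 True] dual_expand[OF pw T2 True] show ?thesis
        by (simp add: c sums_unique2)
    next
      case False then show ?thesis using dual_out[OF T1] dual_out[OF T2] by simp
    qed
  qed
qed



lemma Sseq_nonneg [simp]: "0 \<le> Sseq \<sigma> x j"
  using Sseq_pos[of \<sigma> x j] by linarith

definition coef :: "(complex \<Rightarrow> complex) \<Rightarrow> nat \<Rightarrow> complex" where
  "coef f j = (deriv ^^ j) f 0 / fact j"

definition Tof :: "(real \<Rightarrow> real) \<Rightarrow> (complex \<Rightarrow> complex) \<Rightarrow> (nat \<Rightarrow> complex) \<Rightarrow> complex" where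
  "Tof \<sigma> f a = (if a \<in> Lam \<sigma> then (\<Sum>j. a j * coef f j) else 0)"

lemma A0_bdd:
  assumes f: "f \<in> A0 \<sigma>" and m: "m \<ge> 1"
  shows "bdd_above (range (\<lambda>z. cmod (f z) * exp (- omega_M (Sseq \<sigma> (real m)) (cmod z / real m))))"
proof -
  obtain A where A: "\<And>z. cmod (f z) \<le> A * exp (omega_M (Sseq \<sigma> (real m)) (cmod z / real m))"
    using f m unfolding A0_def by blast
  show ?thesis
  proof (rule bdd_aboveI2)
    fix z
    have "cmod (f z) * exp (- omega_M (Sseq \<sigma> (real m)) (cmod z / real m))
        \<le> A * exp (omega_M (Sseq \<sigma> (real m)) (cmod z / real m)) * exp (- omega_M (Sseq \<sigma> (real m)) (cmod z / real m))"
      by (intro mult_right_mono A) simp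
    also have "\<dots> = A" by (simp add: mult.assoc flip: exp_add)
    finally show "cmod (f z) * exp (- omega_M (Sseq \<sigma> (real m)) (cmod z / real m)) \<le> A" .
  qed
qed

lemma A0_le_sn:
  assumes f: "f \<in> A0 \<sigma>" and m: "m \<ge> 1"
  shows "cmod (f z) \<le> A0_seminorm \<sigma> m f * exp (omega_M (Sseq \<sigma> (real m)) (cmod z / real m))"
proof -
  have "cmod (f z) * exp (- omega_M (Sseq \<sigma> (real m)) (cmod z / real m)) \<le> A0_seminorm \<sigma> m f"
    unfolding A0_seminorm_def by (rule cSUP_upper[OF _ A0_bdd[OF f m]]) simp
  then have "cmod (f z) * exp (- omega_M (Sseq \<sigma> (real m)) (cmod z / real m)) * exp (omega_M (Sseq \<sigma> (real m)) (cmod z / real m))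
     \<le> A0_seminorm \<sigma> m f * exp (omega_M (Sseq \<sigma> (real m)) (cmod z / real m))"
    by (intro mult_right_mono) auto
  then show ?thesis by (simp add: mult.assoc flip: exp_add)
qed

lemma A0_sn_nonneg:
  assumes f: "f \<in> A0 \<sigma>" and m: "m \<ge> 1"
  shows "0 \<le> A0_seminorm \<sigma> m f"
proof -
  have "0 \<le> cmod (f 0) * exp (- omega_M (Sseq \<sigma> (real m)) (cmod 0 / real m))" by simp
  also have "\<dots> \<le> A0_seminorm \<sigma> m f"
    unfolding A0_seminorm_def by (rule cSUP_upper[OF _ A0_bdd[OF f m]]) simp
  finally show ?thesis .
qed

lemma coef_bound:
  assumes pw: "pre_weight \<sigma>" and f: "f \<in> A0 \<sigma>" and m: "m \<ge> 1"
  shows "cmod (coef f j) \<le> exp 1 * A0_seminorm \<sigma> m f * Sseq \<sigma> (real m) 0 / wt \<sigma> m j"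
  unfolding coef_def
  by (rule cauchy_coeff[OF pw m _ A0_le_sn[OF f m]]) (use f in \<open>simp add: A0_def\<close>)

definition Kc :: "(real \<Rightarrow> real) \<Rightarrow> (complex \<Rightarrow> complex) \<Rightarrow> nat \<Rightarrow> real" where
  "Kc \<sigma> f k = exp 1 * A0_seminorm \<sigma> (2 * k) f * Sseq \<sigma> (real (2 * k)) 0"

lemma Kc_nonneg: "f \<in> A0 \<sigma> \<Longrightarrow> k \<ge> 1 \<Longrightarrow> Kc \<sigma> f k \<ge> 0"
  unfolding Kc_def using A0_sn_nonneg[of f \<sigma> "2 * k"] Sseq_pos[of \<sigma> "real (2 * k)" 0]
  by (intro mult_nonneg_nonneg) auto

lemma Tof_series:
  assumes pw: "pre_weight \<sigma>" and f: "f \<in> A0 \<sigma>" and k: "k \<ge> 1"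
    and aL: "\<And>j. cmod (a j) \<le> L * wt \<sigma> k j"
  shows "summable (\<lambda>j. cmod (a j * coef f j))"
    and "cmod (\<Sum>j. a j * coef f j) \<le> 2 * L * Kc \<sigma> f k"
proof -
  have k2: "2 * k \<ge> 1" using k by simp
  define K where "K = Kc \<sigma> f k"
  have K0: "K \<ge> 0" unfolding K_def by (rule Kc_nonneg[OF f k])
  have L0: "L \<ge> 0"
  proof -
    have "0 \<le> cmod (a 0)" by simp
    also have "\<dots> \<le> L * wt \<sigma> k 0" by (rule aL)
    finally show ?thesis using wt_pos[OF k, of \<sigma> 0] by (simp add: zero_le_mult_iff)
  qed
  have tb: "cmod (a j * coef f j) \<le> L * K * (1/2) ^ j" for j
  proof -
    have w1: "wt \<sigma> k j > 0" using k by (rule wt_pos)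
    have w2: "wt \<sigma> (2 * k) j > 0" using k2 by (rule wt_pos)
    have cb: "cmod (coef f j) \<le> K / wt \<sigma> (2 * k) j"
      using coef_bound[OF pw f k2, of j] by (simp add: K_def Kc_def)
    have "cmod (a j * coef f j) = cmod (a j) * cmod (coef f j)" by (simp add: norm_mult)
    also have "\<dots> \<le> (L * wt \<sigma> k j) * (K / wt \<sigma> (2 * k) j)"
      by (intro mult_mono aL cb) (use L0 w1 in auto)
    also have "\<dots> \<le> (L * wt \<sigma> k j) * (K / (2 ^ j * wt \<sigma> k j))"
      using wt_double[OF pw k, of j] w1 w2 K0 L0
      by (intro mult_left_mono divide_left_mono) auto
    also have "\<dots> = L * K * (1/2) ^ j" using w1 by (simp add: power_one_over)
    finally show ?thesis .
  qed
  have sg: "summable (\<lambda>j. L * K * (1/2::real) ^ j)"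
    by (intro summable_mult summable_geometric) simp
  show sm: "summable (\<lambda>j. cmod (a j * coef f j))"
    by (rule summable_comparison_test[OF _ sg]) (use tb in auto)
  have "cmod (\<Sum>j. a j * coef f j) \<le> (\<Sum>j. cmod (a j * coef f j))"
    by (rule summable_norm[OF sm])
  also have "\<dots> \<le> (\<Sum>j. L * K * (1/2::real) ^ j)"
    by (rule suminf_le[OF tb sm sg])
  also have "\<dots> = L * K * (\<Sum>j. (1/2::real) ^ j)"
    by (rule suminf_mult) (rule summable_geometric, simp)
  also have "\<dots> = L * K * 2"
    by (subst suminf_geometric) auto
  finally show "cmod (\<Sum>j. a j * coef f j) \<le> 2 * L * Kc \<sigma> f k" by (simp add: K_def)
qed

lemma Tof_summable:
  assumes pw: "pre_weight \<sigma>" and f: "f \<in> A0 \<sigma>" and a: "a \<in> Lam \<sigma>"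
  shows "summable (\<lambda>j. a j * coef f j)"
proof -
  obtain k where k: "k \<ge> 1" "a \<in> Lam_step \<sigma> k" using a by (auto simp: Lam_iff)
  show ?thesis using Tof_series(1)[OF pw f k(1) abs_le_norm[OF k]] by (rule summable_norm_cancel)
qed

lemma Tof_dual:
  assumes pw: "pre_weight \<sigma>" and f: "f \<in> A0 \<sigma>"
  shows "Tof \<sigma> f \<in> LB_dual \<sigma>"
  unfolding LB_dual_def
proof (intro CollectI conjI ballI allI impI)
  fix a b assume a: "a \<in> Lam \<sigma>" and b: "b \<in> Lam \<sigma>"
  have ab: "(\<lambda>i. a i + b i) \<in> Lam \<sigma>" by (rule Lam_add[OF pw a b])
  show "Tof \<sigma> f (\<lambda>i. a i + b i) = Tof \<sigma> f a + Tof \<sigma> f b"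
    using a b ab suminf_add[OF Tof_summable[OF pw f a] Tof_summable[OF pw f b]]
    by (simp add: Tof_def distrib_right)
next
  fix a c assume a: "a \<in> Lam \<sigma>"
  have ca: "(\<lambda>i. c * a i) \<in> Lam \<sigma>" by (rule Lam_scale[OF a])
  show "Tof \<sigma> f (\<lambda>i. c * a i) = c * Tof \<sigma> f a"
    using a ca suminf_mult[OF Tof_summable[OF pw f a], of c]
    by (simp add: Tof_def mult.assoc)
next
  fix k :: nat assume k: "k \<ge> 1"
  show "\<exists>C. \<forall>a\<in>Lam_step \<sigma> k. cmod (Tof \<sigma> f a) \<le> C * Lam_norm \<sigma> k a"
  proof (intro exI[of _ "2 * Kc \<sigma> f k"] ballI)
    fix a assume a: "a \<in> Lam_step \<sigma> k"
    have "a \<in> Lam \<sigma>" using a k by (auto simp: Lam_iff)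
    then have "cmod (Tof \<sigma> f a) = cmod (\<Sum>j. a j * coef f j)" by (simp add: Tof_def)
    also have "\<dots> \<le> 2 * Lam_norm \<sigma> k a * Kc \<sigma> f k"
      by (rule Tof_series(2)[OF pw f k abs_le_norm[OF k a]])
    finally show "cmod (Tof \<sigma> f a) \<le> 2 * Kc \<sigma> f k * Lam_norm \<sigma> k a" by (simp add: mult_ac)
  qed
next
  fix a assume "a \<notin> Lam \<sigma>"
  then show "Tof \<sigma> f a = 0" by (simp add: Tof_def)
qed

lemma Tof_unit: "Tof \<sigma> f (unit_vec j) = coef f j"
proof -
  have "(\<lambda>i. unit_vec j i * coef f i) = (\<lambda>i. if i = j then coef f i else 0)"
    by (auto simp: unit_vec_def)
  then have "(\<lambda>i. unit_vec j i * coef f i) sums coef f j" using sums_single[of j "coef f"] by simp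
  then show ?thesis using unit_vec_Lam[of j \<sigma>] by (simp add: Tof_def sums_iff)
qed

lemma Phi_Tof:
  assumes f: "f \<in> A0 \<sigma>"
  shows "Phi (Tof \<sigma> f) = f"
proof
  fix z
  have hol: "f holomorphic_on UNIV" using f by (simp add: A0_def)
  have "(\<lambda>n. (deriv ^^ n) f 0 / fact n * (z - 0) ^ n) sums f z"
    by (rule holomorphic_power_series[where r = "norm z + 1"])
       (auto intro: holomorphic_on_subset[OF hol])
  then show "Phi (Tof \<sigma> f) z = f z"
    by (simp add: Phi_def Tof_unit coef_def sums_iff)
qed

lemma Phi_bij:
  assumes pw: "pre_weight \<sigma>"
  shows "bij_betw Phi (LB_dual \<sigma>) (A0 \<sigma>)"
  unfolding bij_betw_def
proof
  show "inj_on Phi (LB_dual \<sigma>)" by (rule Phi_inj[OF pw])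
  show "Phi ` LB_dual \<sigma> = A0 \<sigma>"
  proof
    show "Phi ` LB_dual \<sigma> \<subseteq> A0 \<sigma>" using Phi_A0[OF pw] by blast
    show "A0 \<sigma> \<subseteq> Phi ` LB_dual \<sigma>"
    proof
      fix f assume f: "f \<in> A0 \<sigma>"
      have "f = Phi (Tof \<sigma> f)" using Phi_Tof[OF f] by simp
      then show "f \<in> Phi ` LB_dual \<sigma>" using Tof_dual[OF pw f] by blast
    qed
  qed
qed

lemma Phi_add:
  assumes pw: "pre_weight \<sigma>" and T1: "T1 \<in> LB_dual \<sigma>" and T2: "T2 \<in> LB_dual \<sigma>"
  shows "Phi (\<lambda>a. T1 a + T2 a) = (\<lambda>z. Phi T1 z + Phi T2 z)"
proof
  fix z
  show "Phi (\<lambda>a. T1 a + T2 a) z = Phi T1 z + Phi T2 z"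
    unfolding Phi_def
    using suminf_add[OF Phi_summable[OF pw T1, of z] Phi_summable[OF pw T2, of z]]
    by (simp add: distrib_right)
qed

lemma Phi_scale:
  assumes pw: "pre_weight \<sigma>" and T: "T \<in> LB_dual \<sigma>"
  shows "Phi (\<lambda>a. c * T a) = (\<lambda>z. c * Phi T z)"
proof
  fix z
  show "Phi (\<lambda>a. c * T a) z = c * Phi T z"
    unfolding Phi_def
    using suminf_mult[OF Phi_summable[OF pw T, of z], of c]
    by (simp add: mult.assoc)
qed



lemma wt_nonneg: "0 \<le> wt \<sigma> k j"
  unfolding wt_def by (intro mult_nonneg_nonneg) auto

lemma SUP_scale:
  fixes g :: "nat \<Rightarrow> real"
  assumes c: "c \<ge> 0" and bdd: "bdd_above (range g)"
  shows "(SUP k. c * g k) = c * (SUP k. g k)"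
proof (cases "c = 0")
  case True then show ?thesis by simp
next
  case False
  then have cp: "c > 0" using c by simp
  have bdd2: "bdd_above (range (\<lambda>k. c * g k))"
  proof -
    obtain U where "\<And>k. g k \<le> U" using bdd by (auto simp: bdd_above_def)
    then show ?thesis using c by (intro bdd_aboveI2[of _ _ "c * U"]) (auto intro: mult_left_mono)
  qed
  show ?thesis
  proof (rule antisym)
    show "(SUP k. c * g k) \<le> c * (SUP k. g k)"
      by (rule cSUP_least) (auto intro!: mult_left_mono cSUP_upper bdd c)
    have "(SUP k. g k) \<le> (SUP k. c * g k) / c"
    proof (rule cSUP_least)
      fix k
      have "c * g k \<le> (SUP k. c * g k)" by (rule cSUP_upper[OF _ bdd2]) simp
      then show "g k \<le> (SUP k. c * g k) / c" using cp by (simp add: le_divide_eq mult.commute)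
    qed simp
    then show "c * (SUP k. g k) \<le> (SUP k. c * g k)" using cp by (simp add: le_divide_eq mult.commute)
  qed
qed

lemma sr_ratio_bound:
  assumes pw: "pre_weight \<sigma>" and m: "m \<ge> 1" and a: "a \<in> Lam_step \<sigma> m" and k: "k \<ge> 1"
  shows "step_ratio \<sigma> k a j \<le> Lam_norm \<sigma> m a * (wt \<sigma> m j / wt \<sigma> k j)"
    and "m \<le> k \<Longrightarrow> step_ratio \<sigma> k a j \<le> Lam_norm \<sigma> m a"
proof -
  have wk: "wt \<sigma> k j > 0" using k by (rule wt_pos)
  have wm: "wt \<sigma> m j > 0" using m by (rule wt_pos)
  have L0: "Lam_norm \<sigma> m a \<ge> 0" by (rule Lam_norm_nonneg[OF a])
  have "step_ratio \<sigma> k a j = cmod (a j) / wt \<sigma> k j" by (simp add: sr_wt)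
  also have "\<dots> \<le> Lam_norm \<sigma> m a * wt \<sigma> m j / wt \<sigma> k j"
    by (intro divide_right_mono abs_le_norm[OF m a]) (use wk in auto)
  finally show 1: "step_ratio \<sigma> k a j \<le> Lam_norm \<sigma> m a * (wt \<sigma> m j / wt \<sigma> k j)" by simp
  assume mk: "m \<le> k"
  have "wt \<sigma> m j / wt \<sigma> k j \<le> 1" using wt_mono[OF pw m mk, of j] wk by simp
  then have "Lam_norm \<sigma> m a * (wt \<sigma> m j / wt \<sigma> k j) \<le> Lam_norm \<sigma> m a * 1"
    by (intro mult_left_mono L0)
  then show "step_ratio \<sigma> k a j \<le> Lam_norm \<sigma> m a" using 1 by simp
qed

lemma regular:
  assumes pw: "pre_weight \<sigma>" and B: "LB_bounded \<sigma> B"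
  shows "\<exists>k\<ge>1. \<forall>a\<in>B. \<forall>j. step_ratio \<sigma> k a j \<le> real k"
proof (rule ccontr)
  assume H: "\<not> ?thesis"
  have BL: "B \<subseteq> Lam \<sigma>" using B by (simp add: LB_bounded_def)
  have "\<forall>k. \<exists>p. fst p \<in> B \<and> step_ratio \<sigma> (Suc k) (fst p) (snd p) > real (Suc k)"
  proof
    fix k
    have "\<not> (\<forall>a\<in>B. \<forall>j. step_ratio \<sigma> (Suc k) a j \<le> real (Suc k))"
    proof
      assume A: "\<forall>a\<in>B. \<forall>j. step_ratio \<sigma> (Suc k) a j \<le> real (Suc k)"
      have "\<exists>k\<ge>1. \<forall>a\<in>B. \<forall>j. step_ratio \<sigma> k a j \<le> real k"
      proof (intro exI[of _ "Suc k"] conjI)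
        show "Suc k \<ge> 1" by simp
      qed (rule A)
      with H show False by blast
    qed
    then obtain a j where "a \<in> B" "step_ratio \<sigma> (Suc k) a j > real (Suc k)" by (auto simp: not_le)
    then show "\<exists>p. fst p \<in> B \<and> step_ratio \<sigma> (Suc k) (fst p) (snd p) > real (Suc k)"
      by (intro exI[of _ "(a, j)"]) auto
  qed
  then obtain P where P: "\<And>k. fst (P k) \<in> B" "\<And>k. step_ratio \<sigma> (Suc k) (fst (P k)) (snd (P k)) > real (Suc k)"
    by metis
  define jv where "jv k = snd (P k)" for k
  define av where "av k = fst (P k)" for k
  define Cm where "Cm m = 1 + (\<Sum>i<m. wt \<sigma> m (jv i) / wt \<sigma> (Suc i) (jv i))" for m
  define p where "p a = (SUP k. step_ratio \<sigma> (Suc k) a (jv k))" for a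
  have Cm1: "Cm m \<ge> 1" if "m \<ge> 1" for m
  proof -
    have "0 \<le> (\<Sum>i<m. wt \<sigma> m (jv i) / wt \<sigma> (Suc i) (jv i))"
      by (intro sum_nonneg divide_nonneg_nonneg wt_nonneg)
    then show ?thesis by (simp add: Cm_def)
  qed
  have kb: "step_ratio \<sigma> (Suc k) a (jv k) \<le> Lam_norm \<sigma> m a * Cm m"
    if m: "m \<ge> 1" and a: "a \<in> Lam_step \<sigma> m" for m a k
  proof -
    have L0: "Lam_norm \<sigma> m a \<ge> 0" by (rule Lam_norm_nonneg[OF a])
    show ?thesis
    proof (cases "m \<le> Suc k")
      case True
      have "step_ratio \<sigma> (Suc k) a (jv k) \<le> Lam_norm \<sigma> m a"
        by (rule sr_ratio_bound(2)[OF pw m a _ True]) simp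
      also have "\<dots> \<le> Lam_norm \<sigma> m a * Cm m" using Cm1[OF m] L0
        by (simp add: mult_le_cancel_left1)
      finally show ?thesis .
    next
      case False
      then have km: "k \<in> {..<m}" by simp
      have "step_ratio \<sigma> (Suc k) a (jv k) \<le> Lam_norm \<sigma> m a * (wt \<sigma> m (jv k) / wt \<sigma> (Suc k) (jv k))"
        by (rule sr_ratio_bound(1)[OF pw m a]) simp
      also have "\<dots> \<le> Lam_norm \<sigma> m a * Cm m"
      proof (intro mult_left_mono L0)
        have "wt \<sigma> m (jv k) / wt \<sigma> (Suc k) (jv k) \<le> (\<Sum>i<m. wt \<sigma> m (jv i) / wt \<sigma> (Suc i) (jv i))"
          by (rule member_le_sum[OF km]) (auto intro: divide_nonneg_nonneg wt_nonneg)
        then show "wt \<sigma> m (jv k) / wt \<sigma> (Suc k) (jv k) \<le> Cm m" by (simp add: Cm_def)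
      qed
      finally show ?thesis .
    qed
  qed
  have pbdd: "bdd_above (range (\<lambda>k. step_ratio \<sigma> (Suc k) a (jv k)))" if a: "a \<in> Lam \<sigma>" for a
  proof -
    obtain m where m: "m \<ge> 1" "a \<in> Lam_step \<sigma> m" using a by (auto simp: Lam_iff)
    show ?thesis using kb[OF m] by (intro bdd_aboveI2) blast
  qed
  have sr_add: "step_ratio \<sigma> k (\<lambda>i. a i + b i) j \<le> step_ratio \<sigma> k a j + step_ratio \<sigma> k b j" for k a b j
  proof -
    have "cmod (a j + b j) / wt \<sigma> k j \<le> (cmod (a j) + cmod (b j)) / wt \<sigma> k j"
      by (intro divide_right_mono norm_triangle_ineq) (simp add: wt_def)
    then show ?thesis by (simp add: sr_wt add_divide_distrib)
  qed
  have sr_scale: "step_ratio \<sigma> k (\<lambda>i. c * a i) j = cmod c * step_ratio \<sigma> k a j" for k a j c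
    by (simp add: sr_wt norm_mult)
  have cont: "LB_cont_seminorm \<sigma> p"
    unfolding LB_cont_seminorm_def
  proof (intro conjI ballI allI impI)
    fix a b assume a: "a \<in> Lam \<sigma>" and b: "b \<in> Lam \<sigma>"
    show "p (\<lambda>i. a i + b i) \<le> p a + p b"
      unfolding p_def
    proof (rule cSUP_least)
      fix k
      have "step_ratio \<sigma> (Suc k) (\<lambda>i. a i + b i) (jv k) \<le> step_ratio \<sigma> (Suc k) a (jv k) + step_ratio \<sigma> (Suc k) b (jv k)"
        by (rule sr_add)
      also have "\<dots> \<le> (SUP k. step_ratio \<sigma> (Suc k) a (jv k)) + (SUP k. step_ratio \<sigma> (Suc k) b (jv k))"
        by (intro add_mono cSUP_upper pbdd a b) auto
      finally show "step_ratio \<sigma> (Suc k) (\<lambda>i. a i + b i) (jv k) \<le> (SUP k. step_ratio \<sigma> (Suc k) a (jv k)) + (SUP k. step_ratio \<sigma> (Suc k) b (jv k))" .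
    qed simp
  next
    fix a c assume a: "a \<in> Lam \<sigma>"
    show "p (\<lambda>i. c * a i) = cmod c * p a"
      unfolding p_def sr_scale by (rule SUP_scale[OF _ pbdd[OF a]]) simp
  next
    fix k :: nat assume k: "k \<ge> 1"
    show "\<exists>C. \<forall>a\<in>Lam_step \<sigma> k. p a \<le> C * Lam_norm \<sigma> k a"
    proof (intro exI[of _ "Cm k"] ballI)
      fix a assume a: "a \<in> Lam_step \<sigma> k"
      show "p a \<le> Cm k * Lam_norm \<sigma> k a"
        unfolding p_def using kb[OF k a] by (intro cSUP_least) (auto simp: mult.commute)
    qed
  qed
  then have "bdd_above (p ` B)" using B by (simp add: LB_bounded_def)
  then obtain U where U: "\<And>a. a \<in> B \<Longrightarrow> p a \<le> U" by (auto simp: bdd_above_def)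
  define k where "k = nat \<lceil>U\<rceil>"
  have "U \<le> real k" unfolding k_def by linarith
  have "real (Suc k) < step_ratio \<sigma> (Suc k) (av k) (jv k)" using P(2)[of k] by (simp add: av_def jv_def)
  also have "\<dots> \<le> p (av k)" unfolding p_def
    by (rule cSUP_upper[OF _ pbdd]) (use P(1)[of k] BL in \<open>auto simp: av_def\<close>)
  also have "\<dots> \<le> U" using U P(1)[of k] by (simp add: av_def)
  finally show False using \<open>U \<le> real k\<close> by simp
qed

lemma cont_Phi:
  assumes pw: "pre_weight \<sigma>"
  shows "sn_continuous (LB_dual \<sigma>) {B. LB_bounded \<sigma> B} dual_seminorm
                     {n. n \<ge> 1} (A0_seminorm \<sigma>) Phi"
  unfolding sn_continuous_def
proof (intro ballI)
  fix n :: nat assume "n \<in> {n. n \<ge> 1}"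
  then have n: "n \<ge> 1" by simp
  define m where "m = 2 * n"
  have m: "m \<ge> 1" using n by (simp add: m_def)
  define b where "b j = (\<lambda>i. complex_of_real (wt \<sigma> m j) * unit_vec j i)" for j
  define B where "B = range b"
  have b_step: "b j \<in> Lam_step \<sigma> m" for j
    unfolding b_def by (rule Lam_step_scale[OF m unit_vec_step[OF m]])
  have b_norm: "Lam_norm \<sigma> m (b j) \<le> 1" for j
  proof (rule Lam_norm_le)
    fix i
    have "wt \<sigma> m j > 0" using m by (rule wt_pos)
    then show "step_ratio \<sigma> m (b j) i \<le> 1"
      by (auto simp: sr_wt b_def unit_vec_def norm_mult)
  qed
  have BL: "B \<subseteq> Lam \<sigma>"
  proof
    fix x assume "x \<in> B"
    then obtain j where "x = b j" by (auto simp: B_def)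
    then show "x \<in> Lam \<sigma>" using b_step[of j] m unfolding Lam_iff by blast
  qed
  have Bb: "LB_bounded \<sigma> B"
    unfolding LB_bounded_def
  proof (intro conjI allI impI BL)
    fix q assume q: "LB_cont_seminorm \<sigma> q"
    then obtain C where C: "\<forall>a\<in>Lam_step \<sigma> m. q a \<le> C * Lam_norm \<sigma> m a"
      using m unfolding LB_cont_seminorm_def by blast
    show "bdd_above (q ` B)"
    proof (rule bdd_aboveI2)
      fix a assume "a \<in> B"
      then obtain j where aj: "a = b j" by (auto simp: B_def)
      have L0: "0 \<le> Lam_norm \<sigma> m (b j)" by (rule Lam_norm_nonneg[OF b_step])
      have "q a \<le> C * Lam_norm \<sigma> m (b j)" using C b_step aj by blast
      also have "\<dots> \<le> \<bar>C\<bar> * Lam_norm \<sigma> m (b j)" by (intro mult_right_mono L0) simp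
      also have "\<dots> \<le> \<bar>C\<bar> * 1" by (intro mult_left_mono b_norm) simp
      finally show "q a \<le> \<bar>C\<bar>" by simp
    qed
  qed
  define M0 where "M0 = Sseq \<sigma> (real n) 0"
  have M0p: "M0 > 0" by (simp add: M0_def)
  show "\<exists>F\<subseteq>{B. LB_bounded \<sigma> B}. finite F \<and>
          (\<exists>C. \<forall>T\<in>LB_dual \<sigma>. A0_seminorm \<sigma> n (Phi T) \<le> C * sum (\<lambda>i. dual_seminorm i T) F)"
  proof (intro exI[of _ "{B}"] conjI exI[of _ "2 / M0"] ballI)
    show "{B} \<subseteq> {B. LB_bounded \<sigma> B}" using Bb by simp
    show "finite {B}" by simp
    fix T assume T: "T \<in> LB_dual \<sigma>"
    define D where "D = dual_seminorm B T"
    obtain C0 where C0: "C0 \<ge> 0" "\<And>a. a \<in> Lam_step \<sigma> m \<Longrightarrow> cmod (T a) \<le> C0 * Lam_norm \<sigma> m a"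
      using dual_bound'[OF T m] by blast
    have bddT: "bdd_above (insert 0 ((\<lambda>a. cmod (T a)) ` B))"
    proof (rule bdd_aboveI[of _ C0])
      fix x assume "x \<in> insert 0 ((\<lambda>a. cmod (T a)) ` B)"
      then consider "x = 0" | j where "x = cmod (T (b j))" by (auto simp: B_def)
      then show "x \<le> C0"
      proof cases
        case 1 then show ?thesis using C0 by simp
      next
        case (2 j)
        have "x \<le> C0 * Lam_norm \<sigma> m (b j)" using C0(2)[OF b_step] 2 by simp
        also have "\<dots> \<le> C0 * 1" by (intro mult_left_mono b_norm C0(1))
        finally show ?thesis by simp
      qed
    qed
    have coefD: "cmod (T (unit_vec j)) \<le> D / wt \<sigma> (2 * n) j" for j
    proof -
      have wp: "wt \<sigma> m j > 0" using m by (rule wt_pos)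
      have "cmod (T (b j)) \<le> D" unfolding D_def dual_seminorm_def
        by (rule cSup_upper[OF _ bddT]) (auto simp: B_def)
      moreover have "T (b j) = complex_of_real (wt \<sigma> m j) * T (unit_vec j)"
        unfolding b_def by (rule dual_scale[OF T unit_vec_Lam])
      ultimately have "wt \<sigma> m j * cmod (T (unit_vec j)) \<le> D" using wp by (simp add: norm_mult)
      then have "wt \<sigma> (2 * n) j * cmod (T (unit_vec j)) \<le> D" "wt \<sigma> (2 * n) j > 0"
        using wp by (simp_all add: m_def)
      then show ?thesis by (simp add: le_divide_eq mult.commute)
    qed
    have "A0_seminorm \<sigma> n (Phi T) \<le> 2 / M0 * D"
      unfolding A0_seminorm_def
    proof (rule cSUP_least)
      fix z
      define w where "w = omega_M (Sseq \<sigma> (real n)) (cmod z / real n)"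
      have "cmod (Phi T z) \<le> 2 * D * exp w / M0"
        unfolding Phi_def w_def M0_def by (rule series_bound(2)[OF pw n coefD])
      then have "cmod (Phi T z) * exp (- w) \<le> 2 * D * exp w / M0 * exp (- w)"
        by (intro mult_right_mono) auto
      also have "\<dots> = 2 / M0 * D" by (simp add: field_simps flip: exp_add)
      finally show "cmod (Phi T z) * exp (- omega_M (Sseq \<sigma> (real n)) (cmod z / real n)) \<le> 2 / M0 * D"
        by (simp add: w_def)
    qed simp
    then show "A0_seminorm \<sigma> n (Phi T) \<le> 2 / M0 * sum (\<lambda>i. dual_seminorm i T) {B}"
      by (simp add: D_def)
  qed
qed

lemma cont_inv:
  assumes pw: "pre_weight \<sigma>"
  shows "sn_continuous (A0 \<sigma>) {n. n \<ge> 1} (A0_seminorm \<sigma>)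
                     {B. LB_bounded \<sigma> B} dual_seminorm (inv_into (LB_dual \<sigma>) Phi)"
  unfolding sn_continuous_def
proof (intro ballI)
  fix B assume "B \<in> {B. LB_bounded \<sigma> B}"
  then have Bb: "LB_bounded \<sigma> B" by simp
  have BL: "B \<subseteq> Lam \<sigma>" using Bb by (simp add: LB_bounded_def)
  obtain k where k: "k \<ge> 1" "\<And>a j. a \<in> B \<Longrightarrow> step_ratio \<sigma> k a j \<le> real k"
    using regular[OF pw Bb] by blast
  define C where "C = 2 * real k * exp 1 * Sseq \<sigma> (real (2 * k)) 0"
  show "\<exists>F\<subseteq>{n. n \<ge> 1}. finite F \<and>
          (\<exists>C. \<forall>f\<in>A0 \<sigma>. dual_seminorm B (inv_into (LB_dual \<sigma>) Phi f) \<le> C * sum (\<lambda>i. A0_seminorm \<sigma> i f) F)"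
  proof (intro exI[of _ "{2 * k}"] conjI exI[of _ C] ballI)
    show "{2 * k} \<subseteq> {n. n \<ge> 1}" using k by simp
    show "finite {2 * k}" by simp
    fix f assume f: "f \<in> A0 \<sigma>"
    have inv: "inv_into (LB_dual \<sigma>) Phi f = Tof \<sigma> f"
      by (rule inv_into_f_eq) (use Phi_inj[OF pw] Tof_dual[OF pw f] Phi_Tof[OF f] in auto)
    have bound: "2 * real k * Kc \<sigma> f k = C * A0_seminorm \<sigma> (2 * k) f"
      by (simp add: C_def Kc_def mult_ac)
    have "dual_seminorm B (Tof \<sigma> f) \<le> 2 * real k * Kc \<sigma> f k"
      unfolding dual_seminorm_def
    proof (rule cSup_least)
      show "insert 0 ((\<lambda>a. cmod (Tof \<sigma> f a)) ` B) \<noteq> {}" by simp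
      fix x assume "x \<in> insert 0 ((\<lambda>a. cmod (Tof \<sigma> f a)) ` B)"
      then consider "x = 0" | a where "a \<in> B" "x = cmod (Tof \<sigma> f a)" by auto
      then show "x \<le> 2 * real k * Kc \<sigma> f k"
      proof cases
        case 1 then show ?thesis using Kc_nonneg[OF f k(1)] by simp
      next
        case (2 a)
        have aL: "cmod (a j) \<le> real k * wt \<sigma> k j" for j
        proof -
          have "wt \<sigma> k j > 0" using k(1) by (rule wt_pos)
          then show ?thesis using k(2)[OF 2(1), of j] by (simp add: sr_wt divide_le_eq)
        qed
        have "a \<in> Lam \<sigma>" using 2(1) BL by blast
        then have "x = cmod (\<Sum>j. a j * coef f j)" using 2(2) by (simp add: Tof_def)
        also have "\<dots> \<le> 2 * real k * Kc \<sigma> f k" by (rule Tof_series(2)[OF pw f k(1) aL])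
        finally show ?thesis .
      qed
    qed
    then show "dual_seminorm B (inv_into (LB_dual \<sigma>) Phi f) \<le> C * sum (\<lambda>i. A0_seminorm \<sigma> i f) {2 * k}"
      using inv bound by simp
  qed
qed

theorem lemmaA3:
  fixes \<sigma> :: "real \<Rightarrow> real"
  assumes "pre_weight \<sigma>"
  shows "bij_betw Phi (LB_dual \<sigma>) (A0 \<sigma>)
    \<and> (\<forall>T1\<in>LB_dual \<sigma>. \<forall>T2\<in>LB_dual \<sigma>. Phi (\<lambda>a. T1 a + T2 a) = (\<lambda>z. Phi T1 z + Phi T2 z))
    \<and> (\<forall>T\<in>LB_dual \<sigma>. \<forall>c. Phi (\<lambda>a. c * T a) = (\<lambda>z. c * Phi T z))
    \<and> sn_continuous (LB_dual \<sigma>) {B. LB_bounded \<sigma> B} dual_seminorm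
                     {n. n \<ge> 1} (A0_seminorm \<sigma>) Phi
    \<and> sn_continuous (A0 \<sigma>) {n. n \<ge> 1} (A0_seminorm \<sigma>)
                     {B. LB_bounded \<sigma> B} dual_seminorm (inv_into (LB_dual \<sigma>) Phi)"
  using Phi_bij[OF assms] Phi_add[OF assms] Phi_scale[OF assms] cont_Phi[OF assms] cont_inv[OF assms]
  by blast


end
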